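(* For an ideal $\mathcal{I}$ on $\omega$, the following are equivalent: (1) Player II has a winning strategy in the HMM game with respect to $\mathcal{I}$; (2) Player I has a winning strategy in the tallness game with respect to $\mathcal{I}$; (3) there is an infinitely branching tree $T\subseteq\omega^{<\omega}$ such that $f[\omega]\in\mathcal{I}^+$ for every $f\in[T]$; (4) $\operatorname{non}^*(\mathcal{I})=\aleph_0$.
   Context: Ideals on $\omega$ are assumed to contain all finite sets; $\mathcal{I}^+=\mathcal{P}(\omega)\setminus\mathcal{I}$. A tree is a nonempty $T\subseteq\omega^{<\omega}$ closed under initial segments; it is infinitely branching if every node has infinitely many immediate successors in $T$; $[T]=\{f\in\omega^\omega: f\upharpoonright n\in T\text{ for all }n\}$. $\operatorname{non}^*(\mathcal{I})$ is the least $|\mathcal{A}|$ for $\mathcal{A}\subseteq[\omega]^\omega$ such that for every $I\in\mathcal{I}$ there is $A\in\mathcal{A}$ with $A\cap I$ finite. Tallness game with respect to $\mathcal{I}$: at round $k$, Player I plays $n_k\in\omega$ with $n_0<n_1<\cdots$, then Player II plays $i_k\in\{0,1\}$; Player II wins iff $\{n_k: i_k=1\}$ is infinite and belongs to $\mathcal{I}$. HMM game with respect to $\mathcal{I}$: at round $k$, Player I plays a finite set $F_k\subseteq\omega$, then Player II plays $n_k\in\omega\setminus F_k$; Player I wins iff $\{n_k:k\in\omega\}\in\mathcal{I}$. *)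

theory Defs
  imports Main "HOL-Library.Countable_Set"
begin

definition is_ideal :: "nat set set \<Rightarrow> bool" where
  "is_ideal \<I> \<longleftrightarrow>
     (\<forall>A. finite A \<longrightarrow> A \<in> \<I>) \<and>
     (\<forall>A B. A \<in> \<I> \<longrightarrow> B \<subseteq> A \<longrightarrow> B \<in> \<I>) \<and>
     (\<forall>A B. A \<in> \<I> \<longrightarrow> B \<in> \<I> \<longrightarrow> A \<union> B \<in> \<I>) \<and>
     UNIV \<notin> \<I>"

text \<open>A strategy for Player I maps the list of Player II's previous
  moves to Player I's next move n_k.\<close>
definition tall_play :: "(bool list \<Rightarrow> nat) \<Rightarrow> (nat \<Rightarrow> bool) \<Rightarrow> nat \<Rightarrow> nat" where
  "tall_play \<sigma> i k = \<sigma> (map i [0..<k])"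

definition tallness_I_wins :: "nat set set \<Rightarrow> bool" where
  "tallness_I_wins \<I> \<longleftrightarrow>
     (\<exists>\<sigma>. \<forall>i :: nat \<Rightarrow> bool.
        strict_mono (tall_play \<sigma> i) \<and>
        \<not> (infinite {tall_play \<sigma> i k | k. i k} \<and> {tall_play \<sigma> i k | k. i k} \<in> \<I>))"

text \<open>A strategy for Player II maps the list of Player I's moves
  F_0,...,F_k to n_k.\<close>
definition hmm_play :: "(nat set list \<Rightarrow> nat) \<Rightarrow> (nat \<Rightarrow> nat set) \<Rightarrow> nat \<Rightarrow> nat" where
  "hmm_play \<tau> F k = \<tau> (map F [0..<Suc k])"

definition hmm_II_wins :: "nat set set \<Rightarrow> bool" where
  "hmm_II_wins \<I> \<longleftrightarrow>
     (\<exists>\<tau>. \<forall>F :: nat \<Rightarrow> nat set. (\<forall>k. finite (F k)) \<longrightarrow>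
        (\<forall>k. hmm_play \<tau> F k \<notin> F k) \<and> range (hmm_play \<tau> F) \<notin> \<I>)"

definition is_tree :: "nat list set \<Rightarrow> bool" where
  "is_tree T \<longleftrightarrow> T \<noteq> {} \<and> (\<forall>s \<in> T. \<forall>n. take n s \<in> T)"

definition inf_branching :: "nat list set \<Rightarrow> bool" where
  "inf_branching T \<longleftrightarrow> (\<forall>s \<in> T. infinite {n. s @ [n] \<in> T})"

definition branches :: "nat list set \<Rightarrow> (nat \<Rightarrow> nat) set" where
  "branches T = {f. \<forall>n. map f [0..<n] \<in> T}"

definition non_star_family :: "nat set set \<Rightarrow> nat set set \<Rightarrow> bool" where
  "non_star_family \<I> \<A> \<longleftrightarrow>
     (\<forall>A \<in> \<A>. infinite A) \<and> (\<forall>I \<in> \<I>. \<exists>A \<in> \<A>. finite (A \<inter> I))"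

text \<open>non^*(I) \<le> aleph_0: a countable witness family exists.\<close>
definition non_star_countable :: "nat set set \<Rightarrow> bool" where
  "non_star_countable \<I> \<longleftrightarrow> (\<exists>\<A>. countable \<A> \<and> non_star_family \<I> \<A>)"

end

theory Submission
  imports Defs "HOL-Library.Nat_Bijection"
begin


definition Bset :: "nat set set \<Rightarrow> nat \<Rightarrow> nat set" where
  "Bset A k = from_nat_into A (fst (prod_decode k))"

lemma ideal_empty: "is_ideal I \<Longrightarrow> {} \<in> I"
  unfolding is_ideal_def by (meson finite.emptyI)

lemma ideal_sub: "is_ideal I \<Longrightarrow> A \<in> I \<Longrightarrow> B \<subseteq> A \<Longrightarrow> B \<in> I"
  unfolding is_ideal_def by blast

lemma ns_nonempty: "is_ideal I \<Longrightarrow> non_star_family I A \<Longrightarrow> A \<noteq> {}"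
  using ideal_empty unfolding non_star_family_def by blast

lemma Bset_inf: "is_ideal I \<Longrightarrow> non_star_family I A \<Longrightarrow> infinite (Bset A k)"
proof -
  assume a: "is_ideal I" "non_star_family I A"
  have "from_nat_into A (fst (prod_decode k)) \<in> A" using from_nat_into ns_nonempty[OF a] by blast
  then show ?thesis using a(2) unfolding Bset_def non_star_family_def by blast
qed

lemma KL2:
  assumes "is_ideal I" "non_star_family I A" "countable A"
    "\<forall>c. \<exists>x\<in>S. x \<in> Bset A c \<and> c \<le> x"
  shows "S \<notin> I"
proof
  assume S: "S \<in> I"
  then obtain A0 where A0: "A0 \<in> A" "finite (A0 \<inter> S)"
    using assms(2) unfolding non_star_family_def by blast
  obtain j where j: "from_nat_into A j = A0" using from_nat_into_surj[OF assms(3) A0(1)] by blast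
  obtain t where t: "A0 \<inter> S \<subseteq> {..<t}" using finite_nat_bounded A0(2) by blast
  obtain x where x: "x \<in> S" "x \<in> Bset A (prod_encode (j,t))" "prod_encode (j,t) \<le> x"
    using assms(4) by blast
  have "x \<in> A0" using x(2) j by (simp add: Bset_def)
  moreover have "t \<le> x" using x(3) le_prod_encode_2[of t j] by linarith
  ultimately show False using t x(1) by auto
qed

lemma KL1:
  assumes "is_ideal I" "non_star_family I A" "countable A"
    "\<forall>k. f k \<in> Bset A k \<and> k \<le> f k"
  shows "range f \<notin> I"
  using KL2[OF assms(1-3), of "range f"] assms(4) by blast

lemma ns_tree:
  assumes "is_ideal I" "non_star_family I A" "countable A"
  shows "\<exists>T. is_tree T \<and> inf_branching T \<and> (\<forall>f \<in> branches T. range f \<notin> I)"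
proof -
  define T where "T = {s. \<forall>i<length s. s!i \<in> Bset A i \<and> i \<le> s!i}"
  have "is_tree T" unfolding is_tree_def T_def
    by (auto simp: nth_take intro!: exI[of _ "[]"])
  moreover have "inf_branching T" unfolding inf_branching_def
  proof
    fix s assume s: "s \<in> T"
    have "Bset A (length s) - {..<length s} \<subseteq> {n. s @ [n] \<in> T}"
      using s unfolding T_def by (auto simp: nth_append less_Suc_eq)
    moreover have "infinite (Bset A (length s) - {..<length s})"
      using Bset_inf[OF assms(1,2)] by auto
    ultimately show "infinite {n. s @ [n] \<in> T}" using finite_subset by blast
  qed
  moreover have "\<forall>f \<in> branches T. range f \<notin> I"
  proof
    fix f assume "f \<in> branches T"
    then have "\<forall>k. f k \<in> Bset A k \<and> k \<le> f k"
    proof (intro allI)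
      fix k assume "f \<in> branches T"
      then have "map f [0..<Suc k] \<in> T" unfolding branches_def by blast
      then have "map f [0..<Suc k] ! k \<in> Bset A k \<and> k \<le> map f [0..<Suc k] ! k"
        unfolding T_def by (simp del: upt_Suc)
      then show "f k \<in> Bset A k \<and> k \<le> f k" by (simp del: upt_Suc)
    qed
    then show "range f \<notin> I" using KL1[OF assms] by blast
  qed
  ultimately show ?thesis by blast
qed

lemma ns_hmm:
  assumes "is_ideal I" "non_star_family I A" "countable A"
  shows "hmm_II_wins I"
proof -
  define \<tau> where "\<tau> = (\<lambda>Fs::nat set list. LEAST n. n \<in> Bset A (length Fs - 1) \<and> n \<notin> last Fs \<and> length Fs - 1 \<le> n)"
  show ?thesis unfolding hmm_II_wins_def
  proof (intro exI allI impI)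
    fix F :: "nat \<Rightarrow> nat set" assume fin: "\<forall>k. finite (F k)"
    have play: "hmm_play \<tau> F k = (LEAST n. n \<in> Bset A k \<and> n \<notin> F k \<and> k \<le> n)" for k
      unfolding hmm_play_def \<tau>_def by (simp del: upt_Suc add: last_map)
    have ex: "\<exists>n. n \<in> Bset A k \<and> n \<notin> F k \<and> k \<le> n" for k
    proof -
      have "infinite (Bset A k - F k - {..<k})" using Bset_inf[OF assms(1,2)] fin by auto
      then obtain n where "n \<in> Bset A k - F k - {..<k}" by (metis finite.emptyI ex_in_conv)
      then show ?thesis by auto
    qed
    have P: "hmm_play \<tau> F k \<in> Bset A k \<and> hmm_play \<tau> F k \<notin> F k \<and> k \<le> hmm_play \<tau> F k" for k
      unfolding play by (rule LeastI_ex[OF ex])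
    show "(\<forall>k. hmm_play \<tau> F k \<notin> F k) \<and> range (hmm_play \<tau> F) \<notin> I"
      using P KL1[OF assms] by blast
  qed
qed



fun gT :: "nat set set \<Rightarrow> bool list \<Rightarrow> nat" where
  "gT A [] = (LEAST n. n \<in> Bset A 0)"
| "gT A (x#xs) = (LEAST n. n \<in> Bset A (length (filter id (x#xs))) \<and> gT A xs < n)"

lemma gT_prop:
  assumes "is_ideal I" "non_star_family I A"
  shows "gT A xs \<in> Bset A (length (filter id xs)) \<and> (\<forall>y ys. xs = y#ys \<longrightarrow> gT A ys < gT A xs)"
proof (cases xs)
  case Nil
  have "\<exists>n. n \<in> Bset A 0" using Bset_inf[OF assms, of 0] by (metis finite.emptyI ex_in_conv)
  then show ?thesis using Nil LeastI_ex by force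
next
  case (Cons y ys)
  have "\<exists>n. n \<in> Bset A (length (filter id (y#ys))) \<and> gT A ys < n"
    using Bset_inf[OF assms, of "length (filter id (y#ys))"]
    unfolding infinite_nat_iff_unbounded by blast
  from LeastI_ex[OF this] show ?thesis using Cons by simp
qed

lemma cnt_split:
  "a \<le> b \<Longrightarrow> length (filter id (map i [0..<b])) =
     length (filter id (map i [0..<a])) + length (filter id (map i [a..<b]))"
  by (metis le_Suc_ex upt_add_eq_append zero_le filter_append length_append map_append)

lemma ns_tall:
  assumes "is_ideal I" "non_star_family I A" "countable A"
  shows "tallness_I_wins I"
  unfolding tallness_I_wins_def
proof (intro exI allI)
  fix i :: "nat \<Rightarrow> bool"
  define \<sigma> where "\<sigma> = (\<lambda>bs. gT A (rev bs))"
  define cnt where "cnt = (\<lambda>k. length (filter id (map i [0..<k])))"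
  have pk: "tall_play \<sigma> i k \<in> Bset A (cnt k)" for k
    using gT_prop[OF assms(1,2), of "rev (map i [0..<k])"]
    unfolding tall_play_def \<sigma>_def cnt_def by (simp add: rev_filter[symmetric] del: upt_Suc)
  have "tall_play \<sigma> i k < tall_play \<sigma> i (Suc k)" for k
    using gT_prop[OF assms(1,2), of "rev (map i [0..<Suc k])"]
    unfolding tall_play_def \<sigma>_def by simp
  then have sm: "strict_mono (tall_play \<sigma> i)" by (simp add: strict_mono_Suc_iff)
  moreover have "\<not> (infinite {tall_play \<sigma> i k | k. i k} \<and> {tall_play \<sigma> i k | k. i k} \<in> I)"
  proof
    assume H: "infinite {tall_play \<sigma> i k | k. i k} \<and> {tall_play \<sigma> i k | k. i k} \<in> I"
    have eq: "{tall_play \<sigma> i k | k. i k} = tall_play \<sigma> i ` {k. i k}" by auto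
    have infK: "infinite {k. i k}" using H eq by auto
    have zero: "cnt k = cnt a" if "a \<le> k" "\<forall>j. a \<le> j \<and> j < k \<longrightarrow> \<not> i j" for a k
    proof -
      have "filter id (map i [a..<k]) = []" using that by (auto simp: filter_empty_conv)
      then show ?thesis using cnt_split[OF that(1), of i] unfolding cnt_def by simp
    qed
    have cS: "cnt (Suc k) = cnt k + (if i k then 1 else 0)" for k
      unfolding cnt_def by simp
    have surj: "\<exists>k. i k \<and> cnt k = c" for c
    proof (induction c)
      case 0
      obtain k0 where k0: "i k0" using infK by (metis empty_Collect_eq finite.emptyI)
      define k where "k = (LEAST k. i k)"
      have "i k" using k0 LeastI unfolding k_def by metis
      moreover have "cnt k = cnt 0" using zero[of 0 k] not_less_Least unfolding k_def by blast
      ultimately show ?case unfolding cnt_def by auto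
    next
      case (Suc c)
      then obtain k where k: "i k" "cnt k = c" by blast
      have "\<exists>k'. Suc k \<le> k' \<and> i k'" using infK unfolding infinite_nat_iff_unbounded_le by blast
      define k' where "k' = (LEAST k'. Suc k \<le> k' \<and> i k')"
      have k'p: "Suc k \<le> k' \<and> i k'" unfolding k'_def by (rule LeastI_ex) fact
      have "cnt k' = cnt (Suc k)"
        using zero[of "Suc k" k'] k'p not_less_Least unfolding k'_def by blast
      then show ?case using k k'p cS by auto
    qed
    have "\<forall>c. \<exists>x\<in>{tall_play \<sigma> i k | k. i k}. x \<in> Bset A c \<and> c \<le> x"
    proof
      fix c
      obtain k where k: "i k" "cnt k = c" using surj by blast
      have "cnt k \<le> k" unfolding cnt_def using length_filter_le[of id "map i [0..<k]"] by simp
      moreover have "k \<le> tall_play \<sigma> i k" using strict_mono_imp_increasing[OF sm] by blast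
      ultimately show "\<exists>x\<in>{tall_play \<sigma> i k | k. i k}. x \<in> Bset A c \<and> c \<le> x"
        using k pk[of k] by force
    qed
    then show False using KL2[OF assms] H by blast
  qed
  ultimately show "strict_mono (tall_play \<sigma> i) \<and>
        \<not> (infinite {tall_play \<sigma> i k | k. i k} \<and> {tall_play \<sigma> i k | k. i k} \<in> I)" by blast
qed



fun gb :: "nat list set \<Rightarrow> nat set \<Rightarrow> nat \<Rightarrow> nat list" where
  "gb T J 0 = []"
| "gb T J (Suc k) = gb T J k @ [SOME n. n \<in> J \<and> gb T J k @ [n] \<in> T]"

lemma gb_len: "length (gb T J k) = k"
  by (induction k) auto

lemma gb_some:
  assumes "\<exists>n. n \<in> J \<and> gb T J k @ [n] \<in> T"
  shows "(SOME n. n \<in> J \<and> gb T J k @ [n] \<in> T) \<in> J \<and> gb T J (Suc k) \<in> T"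
proof -
  have "(SOME n. n \<in> J \<and> gb T J k @ [n] \<in> T) \<in> J \<and> gb T J k @ [SOME n. n \<in> J \<and> gb T J k @ [n] \<in> T] \<in> T"
    by (rule someI_ex[OF assms])
  then show ?thesis by (simp only: gb.simps)
qed

lemma tree_ns:
  assumes "is_ideal I" "is_tree T" "inf_branching T" "\<forall>f \<in> branches T. range f \<notin> I"
  shows "non_star_countable I"
proof -
  define \<A> where "\<A> = (\<lambda>s. {n. s @ [n] \<in> T}) ` T"
  have "countable \<A>" unfolding \<A>_def by (rule countable_image) (rule countableI_type)
  moreover have "non_star_family I \<A>"
    unfolding non_star_family_def
  proof (intro conjI ballI)
    fix X assume "X \<in> \<A>" then show "infinite X"
      using assms(3) unfolding \<A>_def inf_branching_def by blast
  next
    fix J assume J: "J \<in> I"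
    show "\<exists>X\<in>\<A>. finite (X \<inter> J)"
    proof (rule ccontr)
      assume nt: "\<not> ?thesis"
      have ex: "\<exists>n. n \<in> J \<and> s @ [n] \<in> T" if s: "s \<in> T" for s
      proof -
        have "{n. s @ [n] \<in> T} \<in> \<A>" using s unfolding \<A>_def by (rule imageI)
        then have "infinite ({n. s @ [n] \<in> T} \<inter> J)" using nt by blast
        then obtain n where "n \<in> {n. s @ [n] \<in> T} \<inter> J" using infinite_imp_nonempty by blast
        then show ?thesis by blast
      qed
      obtain s0 where "s0 \<in> T" using assms(2) unfolding is_tree_def by blast
      then have nil: "[] \<in> T" using assms(2) unfolding is_tree_def by (metis take_0)
      have inv: "gb T J k \<in> T \<and> length (gb T J k) = k" for k
      proof (induction k)
        case 0 then show ?case using nil by simp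
      next
        case (Suc k)
        then have "gb T J k \<in> T" by blast
        from gb_some[OF ex[OF this]] show ?case using gb_len by blast
      qed
      define f where "f k = gb T J (Suc k) ! k" for k
      have fk: "f k = (SOME n. n \<in> J \<and> gb T J k @ [n] \<in> T)" for k
        unfolding f_def using inv[of k] by (simp add: nth_append)
      have fJ: "f k \<in> J" for k
      proof -
        have "gb T J k \<in> T" using inv by blast
        from gb_some[OF ex[OF this]] show ?thesis unfolding fk by blast
      qed
      have mpF: "map f [0..<k] = gb T J k" for k
      proof (induction k)
        case 0 then show ?case by simp
      next
        case (Suc k) then show ?case by (simp add: fk)
      qed
      have "f \<in> branches T" unfolding branches_def using mpF inv by simp
      moreover have "range f \<subseteq> J" using fJ by auto
      then have "range f \<in> I" by (rule ideal_sub[OF assms(1) J])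
      ultimately show False using assms(4) by blast
    qed
  qed
  ultimately show ?thesis unfolding non_star_countable_def by blast
qed

fun hM :: "(nat set list \<Rightarrow> nat) \<Rightarrow> nat set \<Rightarrow> nat \<Rightarrow> nat list" where
  "hM \<tau> J 0 = []"
| "hM \<tau> J (Suc k) = hM \<tau> J k @ [LEAST m. \<tau> (map lessThan (hM \<tau> J k) @ [{..<m}]) \<in> J]"

lemma hmm_ns:
  assumes "is_ideal I" "hmm_II_wins I"
  shows "non_star_countable I"
proof -
  obtain \<tau> where \<tau>: "\<forall>F :: nat \<Rightarrow> nat set. (\<forall>k. finite (F k)) \<longrightarrow>
        (\<forall>k. hmm_play \<tau> F k \<notin> F k) \<and> range (hmm_play \<tau> F) \<notin> I"
    using assms(2) unfolding hmm_II_wins_def by blast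
  define \<A> where "\<A> = (\<lambda>ms. range (\<lambda>m. \<tau> (map lessThan ms @ [{..<m}]))) ` (UNIV :: nat list set)"
  have "countable \<A>" unfolding \<A>_def by (rule countable_image) (rule countableI_type)
  moreover have "non_star_family I \<A>"
    unfolding non_star_family_def
  proof (intro conjI ballI)
    fix X assume "X \<in> \<A>"
    then obtain ms where X: "X = range (\<lambda>m. \<tau> (map lessThan ms @ [{..<m}]))"
      unfolding \<A>_def by blast
    have "m \<le> \<tau> (map lessThan ms @ [{..<m}])" for m
    proof -
      define L where "L = map lessThan ms @ [{..<m}]"
      define F where "F k = (if k \<le> length ms then L ! k else {})" for k
      have fin: "\<forall>k. finite (F k)" unfolding F_def L_def
        by (auto simp: nth_append)
      have "map F [0..<Suc (length ms)] = map (\<lambda>k. L ! k) [0..<length L]"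
        unfolding L_def F_def by (intro map_cong) auto
      also have "\<dots> = L" by (rule map_nth)
      finally have mapF: "map F [0..<Suc (length ms)] = L" .
      have hp: "hmm_play \<tau> F (length ms) = \<tau> L" unfolding hmm_play_def by (simp only: mapF)
      have Fl: "F (length ms) = {..<m}" unfolding F_def L_def by (simp add: nth_append)
      have c: "(\<forall>k. hmm_play \<tau> F k \<notin> F k) \<and> range (hmm_play \<tau> F) \<notin> I"
        using spec[OF \<tau>, of F] fin by (rule mp)
      then have "hmm_play \<tau> F (length ms) \<notin> F (length ms)" by blast
      then have "\<tau> L \<notin> {..<m}" unfolding hp Fl .
      then show ?thesis unfolding L_def by simp
    qed
    then have bnd: "\<forall>N. \<exists>n\<ge>N. n \<in> X"
    proof -
      assume b: "\<And>m. m \<le> \<tau> (map lessThan ms @ [{..<m}])"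
      show ?thesis
      proof
        fix N
        have "\<tau> (map lessThan ms @ [{..<N}]) \<in> X" unfolding X by (rule rangeI)
        then show "\<exists>n\<ge>N. n \<in> X" using b[of N] by blast
      qed
    qed
    then show "infinite X" unfolding infinite_nat_iff_unbounded_le .
  next
    fix J assume J: "J \<in> I"
    show "\<exists>X\<in>\<A>. finite (X \<inter> J)"
    proof (rule ccontr)
      assume nt: "\<not> ?thesis"
      have ex: "\<exists>m. \<tau> (map lessThan ms @ [{..<m}]) \<in> J" for ms
      proof -
        have "range (\<lambda>m. \<tau> (map lessThan ms @ [{..<m}])) \<in> \<A>" unfolding \<A>_def by (rule rangeI)
        then have "infinite (range (\<lambda>m. \<tau> (map lessThan ms @ [{..<m}])) \<inter> J)" using nt by blast
        then obtain x where "x \<in> range (\<lambda>m. \<tau> (map lessThan ms @ [{..<m}])) \<inter> J"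
          using infinite_imp_nonempty by blast
        then show ?thesis by blast
      qed
      have len: "length (hM \<tau> J k) = k" for k by (induction k) auto
      define F where "F k = {..< hM \<tau> J (Suc k) ! k}" for k
      have mpF: "map F [0..<k] = map lessThan (hM \<tau> J k)" for k
      proof (induction k)
        case 0 then show ?case by simp
      next
        case (Suc k) then show ?case using len[of k] by (simp add: F_def nth_append)
      qed
      have "hmm_play \<tau> F k \<in> J" for k
      proof -
        have eq: "hmm_play \<tau> F k = \<tau> (map lessThan (hM \<tau> J k) @ [{..<LEAST m. \<tau> (map lessThan (hM \<tau> J k) @ [{..<m}]) \<in> J}])"
          unfolding hmm_play_def mpF[of "Suc k"] by simp
        have L: "\<tau> (map lessThan (hM \<tau> J k) @ [{..<LEAST m. \<tau> (map lessThan (hM \<tau> J k) @ [{..<m}]) \<in> J}]) \<in> J"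
          by (rule LeastI_ex[OF ex[of "hM \<tau> J k"]])
        show ?thesis unfolding eq by (rule L)
      qed
      then have "range (hmm_play \<tau> F) \<subseteq> J" by auto
      then have "range (hmm_play \<tau> F) \<in> I" by (rule ideal_sub[OF assms(1) J])
      moreover have "\<forall>k. finite (F k)" unfolding F_def by simp
      ultimately show False using mp[OF spec[OF \<tau>, of F]] by blast
    qed
  qed
  ultimately show ?thesis unfolding non_star_countable_def by blast
qed

fun tL :: "(bool list \<Rightarrow> nat) \<Rightarrow> nat set \<Rightarrow> nat \<Rightarrow> bool list" where
  "tL \<sigma> J 0 = []"
| "tL \<sigma> J (Suc k) = tL \<sigma> J k @ [\<sigma> (tL \<sigma> J k) \<in> J]"

lemma tall_ns:
  assumes "is_ideal I" "tallness_I_wins I"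
  shows "non_star_countable I"
proof -
  obtain \<sigma> where \<sigma>: "\<forall>i :: nat \<Rightarrow> bool.
        strict_mono (tall_play \<sigma> i) \<and>
        \<not> (infinite {tall_play \<sigma> i k | k. i k} \<and> {tall_play \<sigma> i k | k. i k} \<in> I)"
    using assms(2) unfolding tallness_I_wins_def by blast
  define \<A> where "\<A> = (\<lambda>p. range (\<lambda>j. \<sigma> (p @ replicate j False))) ` (UNIV :: bool list set)"
  have "countable \<A>" unfolding \<A>_def by (rule countable_image) (rule countableI_type)
  moreover have "non_star_family I \<A>"
    unfolding non_star_family_def
  proof (intro conjI ballI)
    fix X assume "X \<in> \<A>"
    then obtain p where X: "X = range (\<lambda>j. \<sigma> (p @ replicate j False))"
      unfolding \<A>_def by blast
    define i where "i k = (if k < length p then p ! k else False)" for k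
    have mi: "map i [0..<length p + j] = p @ replicate j False" for j
      by (rule nth_equalityI) (auto simp: i_def nth_append)
    have "strict_mono (\<lambda>j. tall_play \<sigma> i (length p + j))"
      using \<sigma>[rule_format, of i] unfolding strict_mono_def by simp
    then have "inj (\<lambda>j. \<sigma> (p @ replicate j False))"
      unfolding tall_play_def mi by (rule strict_mono_imp_inj_on)
    then show "infinite X" unfolding X by (rule range_inj_infinite)
  next
    fix J assume J: "J \<in> I"
    show "\<exists>X\<in>\<A>. finite (X \<inter> J)"
    proof (rule ccontr)
      assume nt: "\<not> ?thesis"
      have ex: "\<exists>j. \<sigma> (p @ replicate j False) \<in> J" for p
      proof -
        have "range (\<lambda>j. \<sigma> (p @ replicate j False)) \<in> \<A>" unfolding \<A>_def by (rule rangeI)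
        then have "infinite (range (\<lambda>j. \<sigma> (p @ replicate j False)) \<inter> J)" using nt by blast
        then obtain x where "x \<in> range (\<lambda>j. \<sigma> (p @ replicate j False)) \<inter> J"
          using infinite_imp_nonempty by blast
        then show ?thesis by blast
      qed
      have len: "length (tL \<sigma> J k) = k" for k by (induction k) auto
      define i where "i k = tL \<sigma> J (Suc k) ! k" for k
      have mpF: "map i [0..<k] = tL \<sigma> J k" for k
      proof (induction k)
        case 0 then show ?case by simp
      next
        case (Suc k) then show ?case using len[of k] by (simp add: i_def nth_append)
      qed
      have ik: "i k \<longleftrightarrow> tall_play \<sigma> i k \<in> J" for k
        unfolding i_def tall_play_def mpF using len[of k] by (simp add: nth_append)
      have sm: "strict_mono (tall_play \<sigma> i)" using \<sigma>[rule_format, of i] by blast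
      have sub: "{tall_play \<sigma> i k | k. i k} \<subseteq> J" using ik by blast
      have unb: "\<exists>k'\<ge>k. i k'" for k
      proof (rule ccontr)
        assume "\<not> (\<exists>k'\<ge>k. i k')"
        then have nk: "\<forall>k'\<ge>k. \<not> i k'" by blast
        have rep: "map i [0..<k + j] = tL \<sigma> J k @ replicate j False" for j
        proof (induction j)
          case 0 then show ?case using mpF by simp
        next
          case (Suc j)
          have "map i [0..<k + Suc j] = map i [0..<k + j] @ [i (k+j)]" by simp
          also have "\<dots> = tL \<sigma> J k @ replicate j False @ [False]" using Suc nk by simp
          finally show ?case by (simp add: replicate_append_same)
        qed
        obtain j where "\<sigma> (tL \<sigma> J k @ replicate j False) \<in> J" using ex by blast
        then have "i (k + j)" using ik[of "k+j"] rep[of j] unfolding tall_play_def by simp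
        then show False using nk by simp
      qed
      have "infinite {k. i k}" unfolding infinite_nat_iff_unbounded_le using unb by blast
      then have inf2: "infinite (tall_play \<sigma> i ` {k. i k})"
        using finite_imageD[OF _ strict_mono_imp_inj_on[OF sm]] by blast
      have "{tall_play \<sigma> i k | k. i k} = tall_play \<sigma> i ` {k. i k}" by auto
      then have "infinite {tall_play \<sigma> i k | k. i k}" using inf2 by simp
      moreover have "{tall_play \<sigma> i k | k. i k} \<in> I" using ideal_sub[OF assms(1) J sub] .
      ultimately show False using \<sigma>[rule_format, of i] by blast
    qed
  qed
  ultimately show ?thesis unfolding non_star_countable_def by blast
qed


theorem mainTheorem14:
  fixes \<I> :: "nat set set"
  assumes "is_ideal \<I>"
  shows "(hmm_II_wins \<I> \<longleftrightarrow> tallness_I_wins \<I>) \<and>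
         (tallness_I_wins \<I> \<longleftrightarrow>
            (\<exists>T. is_tree T \<and> inf_branching T \<and> (\<forall>f \<in> branches T. range f \<notin> \<I>))) \<and>
         ((\<exists>T. is_tree T \<and> inf_branching T \<and> (\<forall>f \<in> branches T. range f \<notin> \<I>)) \<longleftrightarrow>
            non_star_countable \<I>)"
proof -
  have ns_all: "hmm_II_wins \<I> \<and> tallness_I_wins \<I> \<and>
      (\<exists>T. is_tree T \<and> inf_branching T \<and> (\<forall>f \<in> branches T. range f \<notin> \<I>))"
    if "non_star_countable \<I>"
  proof -
    have "\<exists>A. countable A \<and> non_star_family \<I> A"
      using that unfolding non_star_countable_def .
    then obtain A where A: "countable A" "non_star_family \<I> A" by (elim exE conjE)
    show ?thesis using ns_hmm[OF assms A(2,1)] ns_tall[OF assms A(2,1)] ns_tree[OF assms A(2,1)]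
      by blast
  qed
  have e1: "hmm_II_wins \<I> \<longleftrightarrow> non_star_countable \<I>"
  proof
    assume "hmm_II_wins \<I>" then show "non_star_countable \<I>" by (rule hmm_ns[OF assms])
  next
    assume "non_star_countable \<I>" then show "hmm_II_wins \<I>" using ns_all by blast
  qed
  have e2: "tallness_I_wins \<I> \<longleftrightarrow> non_star_countable \<I>"
  proof
    assume "tallness_I_wins \<I>" then show "non_star_countable \<I>" by (rule tall_ns[OF assms])
  next
    assume "non_star_countable \<I>" then show "tallness_I_wins \<I>" using ns_all by blast
  qed
  have e3: "(\<exists>T. is_tree T \<and> inf_branching T \<and> (\<forall>f \<in> branches T. range f \<notin> \<I>)) \<longleftrightarrow> non_star_countable \<I>"
  proof
    assume "\<exists>T. is_tree T \<and> inf_branching T \<and> (\<forall>f \<in> branches T. range f \<notin> \<I>)"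
    then obtain T where "is_tree T" "inf_branching T" "\<forall>f \<in> branches T. range f \<notin> \<I>" by blast
    then show "non_star_countable \<I>" by (rule tree_ns[OF assms])
  next
    assume "non_star_countable \<I>"
    then show "\<exists>T. is_tree T \<and> inf_branching T \<and> (\<forall>f \<in> branches T. range f \<notin> \<I>)"
      using ns_all by blast
  qed
  show ?thesis unfolding e1 e2 e3 by simp
qed

end
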